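(* Let $\Phi:I\to O$ be a quantum channel and let $\{E_{bk}\}_{b,k}$ be a family of Kraus operators related to $\Phi$, as described in the context. Then the quantum confusability multigraph of $\Phi$ is $$\tilde S_\Phi=\mathrm{span}\Big\{\sum_{i,a,j,a'}e^{aa'}_{ij}\otimes\theta_{(E_{bl}e^{a'}_j),(E_{bk}e^a_i)}\ :\ b,k,l\Big\}\subseteq B(H_{in})\otimes O^{op}.$$
   Context: All Hilbert spaces are finite dimensional; inner products are linear in the second variable. $H_{in}=\bigoplus_a H^a_{in}$, $H_{out}=\bigoplus_b H^b_{out}$, $I=\bigoplus_a B(H^a_{in})\subseteq B(H_{in})$, $O=\bigoplus_b B(H^b_{out})\subseteq B(H_{out})$. A quantum channel is a trace-preserving completely positive map $\Phi:I\to O$. $\{e^a_i\}_i$ is an orthonormal basis of $H^a_{in}$; $e^{aa'}_{ij}=\theta_{e^a_i,e^{a'}_j}$ are the matrix units of $B(H_{in})$, where $\theta_{\xi,\eta}(\eta')=\langle\eta,\eta'\rangle\xi$; $e^a_{ij}=e^{aa}_{ij}$. Let $i_a:H^a_{in}\to H_{in}$, $j_b:H^b_{out}\to H_{out}$ be the canonical inclusions. Kraus operators related to $\Phi$: for each $a,b$ the compression $x\mapsto j_b^*\Phi(i_a x i_a^* )j_b$ is CP with Kraus operators $E_{abk}:H^a_{in}\to H^b_{out}$, and after renaming the indices $(a,k)$ as $k$, one writes the resulting operators $E_{abk}i_a^*$ as $E_{bk}:H_{in}\to H^b_{out}$ (so each $E_{bk}$ vanishes on $(H^{a}_{in})^\perp$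 for some $a$), with $\Phi(x)=\sum_{b,k}j_bE_{bk}\,x\,E_{bk}^*j_b^*$ for $x\in I$; vectors $E_{bk}\xi$ are regarded in $H_{out}$ via $j_b$, and $\theta$ of two vectors in $H_{out}$ is an element of $B(H_{out})$, here viewed in $O^{op}$. $O^{op}$ is the opposite algebra of $O$ (product $a*b=ba$). $\mathcal{M}_\Phi=H_{in}\otimes O^{op}$ is the right Hilbert $O^{op}$-module with $(\xi\otimes a)*x=\xi\otimes(a*x)$, $\langle\xi\otimes a,\eta\otimes b\rangle_{O^{op}}=\langle\xi,\eta\rangle a^**b$; $\mathcal{L}(\mathcal{M}_\Phi)\cong B(H_{in})\otimes O^{op}$. $C_\Phi$ is the $O^{op}$-linear map with $C_\Phi(e^a_j\otimes1)=\sum_i e^a_i\otimes\Phi(e^a_{ji})$. A Stinespring module related to $\Phi$ is a pair $(\mathcal{E},W)$, $\mathcal{E}$ a Hilbert $O^{op}$-module, $W$ an adjointable module map $\mathcal{M}_\Phi\to\mathcal{E}$ with $W^*W=C_\Phi$. The quantum confusability multigraph is $\tilde S_\Phi=W^*\mathcal{L}(\mathcal{E})W\subseteq B(H_{in})\otimes O^{op}$ for any Stinespring module (independent of the choice). *)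

theory Defs
  imports "HOL-Analysis.Analysis"
begin

text \<open>H_in = complex^'i, H_out = complex^'o with their
standard inner products (linear in the second variable) and standard orthonormal bases.
The direct-sum decompositions are given by block labellings bin :: 'i => 'a and
bout :: 'o => 'b: the basis vector e_r belongs to the summand with label bin r.
Operators H_m -> H_n are matrices complex^'m^'n; matrix product is **.\<close>

definition cinner :: "complex^'n \<Rightarrow> complex^'n \<Rightarrow> complex" where
  "cinner v w = (\<Sum>i\<in>UNIV. cnj (v$i) * w$i)"

definition cadj :: "complex^'n^'m \<Rightarrow> complex^'m^'n" where
  "cadj A = (\<chi> i j. cnj (A$j$i))"

text \<open>theta_{xi,eta} (eta') = <eta,eta'> xi, i.e. the matrix xi eta^*.\<close>
definition theta :: "complex^'n \<Rightarrow> complex^'n \<Rightarrow> complex^'n^'n" where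
  "theta xi eta = (\<chi> r s. xi$r * cnj (eta$s))"

definition munit :: "'n \<Rightarrow> 'n \<Rightarrow> complex^'n^'n" where
  "munit i j = theta (axis i 1) (axis j 1)"

text \<open>The block-diagonal algebra bigoplus_a B(H^a) inside B(H).\<close>
definition balg :: "('n \<Rightarrow> 'a) \<Rightarrow> (complex^'n^'n) set" where
  "balg bl = {x. \<forall>r s. bl r \<noteq> bl s \<longrightarrow> x$r$s = 0}"

text \<open>Compression Y |-> j_b j_b^* Y j_b j_b^* onto the summand with label b.\<close>
definition bcompress :: "('n \<Rightarrow> 'a) \<Rightarrow> 'a \<Rightarrow> complex^'n^'n \<Rightarrow> complex^'n^'n" where
  "bcompress bl b Y = (\<chi> r s. if bl r = b \<and> bl s = b then Y$r$s else 0)"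

definition msc :: "complex \<Rightarrow> complex^'n^'m \<Rightarrow> complex^'n^'m" where
  "msc c A = (\<chi> r s. c * A$r$s)"

definition psd :: "complex^'n^'n \<Rightarrow> bool" where
  "psd A \<longleftrightarrow> (\<forall>v. Im (cinner v (A *v v)) = 0 \<and> Re (cinner v (A *v v)) \<ge> 0)"

definition block_psd :: "nat \<Rightarrow> (nat \<Rightarrow> nat \<Rightarrow> complex^'n^'n) \<Rightarrow> bool" where
  "block_psd n x \<longleftrightarrow> (\<forall>v :: nat \<Rightarrow> complex^'n.
     Im (\<Sum>i<n. \<Sum>j<n. cinner (v i) (x i j *v v j)) = 0 \<and>
     Re (\<Sum>i<n. \<Sum>j<n. cinner (v i) (x i j *v v j)) \<ge> 0)"

definition quantum_channel ::
  "('i \<Rightarrow> 'a) \<Rightarrow> ('o \<Rightarrow> 'b) \<Rightarrow> (complex^'i^'i \<Rightarrow> complex^'o^'o) \<Rightarrow> bool" where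
  "quantum_channel bin bout \<Phi> \<longleftrightarrow>
     (\<forall>x\<in>balg bin. \<forall>y\<in>balg bin. \<forall>c. \<Phi> (x + y) = \<Phi> x + \<Phi> y \<and> \<Phi> (msc c x) = msc c (\<Phi> x)) \<and>
     (\<forall>x\<in>balg bin. \<Phi> x \<in> balg bout) \<and>
     (\<forall>x\<in>balg bin. trace (\<Phi> x) = trace x) \<and>
     (\<forall>n x. (\<forall>i j. x i j \<in> balg bin) \<longrightarrow> block_psd n x \<longrightarrow> block_psd n (\<lambda>i j. \<Phi> (x i j)))"

text \<open>K is a finite set of indices (a,b,k); the matrix
E (a,b,k) :: complex^'i^'o is j_b E_abk i_a^*, i.e. E_abk : H^a_in -> H^b_out embedded
(zero outside rows of block b and columns of block a).  For each a, b the operators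
E (a,b,k), (a,b,k) in K, are Kraus operators of x |-> j_b^* Phi(i_a x i_a^*) j_b.
After renaming (a,k) as k, E (a,b,k) is the operator E_{bk} of the paper.\<close>
definition kraus_related ::
  "('i \<Rightarrow> 'a) \<Rightarrow> ('o \<Rightarrow> 'b) \<Rightarrow> (complex^'i^'i \<Rightarrow> complex^'o^'o)
    \<Rightarrow> ('a \<times> 'b \<times> 'k) set \<Rightarrow> ('a \<times> 'b \<times> 'k \<Rightarrow> complex^'i^'o) \<Rightarrow> bool" where
  "kraus_related bin bout \<Phi> K E \<longleftrightarrow>
     finite K \<and>
     (\<forall>(a,b,k)\<in>K. \<forall>r s. E (a,b,k) $ r $ s \<noteq> 0 \<longrightarrow> bout r = b \<and> bin s = a) \<and>
     (\<forall>a b x. (\<forall>r s. x$r$s \<noteq> 0 \<longrightarrow> bin r = a \<and> bin s = a) \<longrightarrow>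
        bcompress bout b (\<Phi> x) =
          (\<Sum>k\<in>{k. (a,b,k) \<in> K}. E (a,b,k) ** x ** cadj (E (a,b,k))))"

definition opnorm :: "complex^'o^'o \<Rightarrow> real" where
  "opnorm A = onorm (\<lambda>v. A *v v)"

text \<open>Hilbert O^op-module structure on the type 'e: 'e is an abelian group, sc is the
complex scalar multiplication (making 'e a complex vector space).
act x a = x * a (right action of O^op), ip = O^op-valued inner product.  Products in
O^op are written through products in O: a * b (in O^op) = b ** a.\<close>
definition hilbert_opmod ::
  "('o \<Rightarrow> 'b) \<Rightarrow> (complex \<Rightarrow> 'e::ab_group_add \<Rightarrow> 'e) \<Rightarrow> ('e \<Rightarrow> complex^'o^'o \<Rightarrow> 'e)
     \<Rightarrow> ('e \<Rightarrow> 'e \<Rightarrow> complex^'o^'o) \<Rightarrow> bool" where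
  "hilbert_opmod bout sc act ip \<longleftrightarrow>
     (\<forall>c x y. sc c (x + y) = sc c x + sc c y) \<and>
     (\<forall>c d x. sc (c + d) x = sc c x + sc d x) \<and>
     (\<forall>c d x. sc c (sc d x) = sc (c * d) x) \<and>
     (\<forall>x. sc 1 x = x) \<and>
     (\<forall>x y a. a \<in> balg bout \<longrightarrow> act (x + y) a = act x a + act y a) \<and>
     (\<forall>x a b. a \<in> balg bout \<longrightarrow> b \<in> balg bout \<longrightarrow> act x (a + b) = act x a + act x b) \<and>
     (\<forall>x a c. a \<in> balg bout \<longrightarrow> act (sc c x) a = sc c (act x a) \<and> act x (msc c a) = sc c (act x a)) \<and>
     (\<forall>x a b. a \<in> balg bout \<longrightarrow> b \<in> balg bout \<longrightarrow> act (act x a) b = act x (b ** a)) \<and>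
     (\<forall>x. act x (mat 1) = x) \<and>
     (\<forall>x y. ip x y \<in> balg bout) \<and>
     (\<forall>x y z. ip x (y + z) = ip x y + ip x z) \<and>
     (\<forall>x y c. ip x (sc c y) = msc c (ip x y)) \<and>
     (\<forall>x y a. a \<in> balg bout \<longrightarrow> ip x (act y a) = a ** ip x y) \<and>
     (\<forall>x y. ip y x = cadj (ip x y)) \<and>
     (\<forall>x. psd (ip x x)) \<and>
     (\<forall>x. ip x x = 0 \<longrightarrow> x = 0) \<and>
     (\<forall>s :: nat \<Rightarrow> 'e.
        (\<forall>e>0. \<exists>N. \<forall>m\<ge>N. \<forall>n\<ge>N. sqrt (opnorm (ip (s m - s n) (s m - s n))) < e) \<longrightarrow>
        (\<exists>x. \<forall>e>0. \<exists>N. \<forall>n\<ge>N. sqrt (opnorm (ip (s n - x) (s n - x))) < e))"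

definition adjoint_pair ::
  "'x set \<Rightarrow> 'y set \<Rightarrow> ('x \<Rightarrow> 'x \<Rightarrow> 'r) \<Rightarrow> ('y \<Rightarrow> 'y \<Rightarrow> 'r) \<Rightarrow> ('x \<Rightarrow> 'y) \<Rightarrow> ('y \<Rightarrow> 'x) \<Rightarrow> bool" where
  "adjoint_pair A B ipA ipB T T' \<longleftrightarrow>
     (\<forall>x\<in>A. T x \<in> B) \<and> (\<forall>y\<in>B. T' y \<in> A) \<and> (\<forall>x\<in>A. \<forall>y\<in>B. ipB (T x) y = ipA x (T' y))"

text \<open>The module M_Phi = H_in (x) O^op: an element sum_i e_i (x) v_i is represented by
v :: 'i => O.  (xi (x) a) * x = xi (x) (x ** a);  <v,w> = sum_i w_i ** v_i^*.\<close>
definition Mcar :: "('o \<Rightarrow> 'b) \<Rightarrow> ('i \<Rightarrow> complex^'o^'o) set" where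
  "Mcar bout = {v. \<forall>i. v i \<in> balg bout}"

definition Mip :: "('i \<Rightarrow> complex^'o^'o) \<Rightarrow> ('i \<Rightarrow> complex^'o^'o) \<Rightarrow> complex^'o^'o" where
  "Mip v w = (\<Sum>i\<in>UNIV. w i ** cadj (v i))"

text \<open>Elements of B(H_in) (x) O^op are written X = sum_{i,j} e_{ij} (x) X i j, X i j in O;
they act on M_Phi by  (X v)_i = sum_j X i j * v j (product in O^op) = sum_j v j ** X i j.\<close>
definition opX :: "('i \<Rightarrow> 'i \<Rightarrow> complex^'o^'o) \<Rightarrow> ('i \<Rightarrow> complex^'o^'o) \<Rightarrow> ('i \<Rightarrow> complex^'o^'o)" where
  "opX X v = (\<lambda>i. \<Sum>j\<in>UNIV. v j ** X i j)"

text \<open>C_Phi (e_j (x) 1) = sum_{i in the block of j} e_i (x) Phi(e_{ji}).\<close>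
definition Cmat :: "('i \<Rightarrow> 'a) \<Rightarrow> (complex^'i^'i \<Rightarrow> complex^'o^'o) \<Rightarrow> 'i \<Rightarrow> 'i \<Rightarrow> complex^'o^'o" where
  "Cmat bin \<Phi> i j = (if bin i = bin j then \<Phi> (munit j i) else 0)"

definition stinespring_module ::
  "('i \<Rightarrow> 'a) \<Rightarrow> ('o \<Rightarrow> 'b) \<Rightarrow> (complex^'i^'i \<Rightarrow> complex^'o^'o)
    \<Rightarrow> (complex \<Rightarrow> 'e::ab_group_add \<Rightarrow> 'e) \<Rightarrow> ('e \<Rightarrow> complex^'o^'o \<Rightarrow> 'e)
    \<Rightarrow> ('e \<Rightarrow> 'e \<Rightarrow> complex^'o^'o) \<Rightarrow> (('i \<Rightarrow> complex^'o^'o) \<Rightarrow> 'e) \<Rightarrow> bool" where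
  "stinespring_module bin bout \<Phi> sc act ip W \<longleftrightarrow>
     hilbert_opmod bout sc act ip \<and>
     (\<exists>W'. adjoint_pair (Mcar bout) UNIV Mip ip W W' \<and>
           (\<forall>v\<in>Mcar bout. W' (W v) = opX (Cmat bin \<Phi>) v))"

text \<open>W^* L(E) W, as a subset of B(H_in) (x) O^op.\<close>
definition confus_multigraph_of ::
  "('o \<Rightarrow> 'b) \<Rightarrow> ('e \<Rightarrow> 'e \<Rightarrow> complex^'o^'o) \<Rightarrow> (('i \<Rightarrow> complex^'o^'o) \<Rightarrow> 'e)
    \<Rightarrow> ('i \<Rightarrow> 'i \<Rightarrow> complex^'o^'o) set" where
  "confus_multigraph_of bout ip W =
     {X. (\<forall>i j. X i j \<in> balg bout) \<and>
         (\<exists>T T' W'. adjoint_pair UNIV UNIV ip ip T T' \<and>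
            adjoint_pair (Mcar bout) UNIV Mip ip W W' \<and>
            (\<forall>v\<in>Mcar bout. W' (T (W v)) = opX X v))}"

definition span_fam :: "'p set \<Rightarrow> ('p \<Rightarrow> 'i \<Rightarrow> 'i \<Rightarrow> complex^'o^'o) \<Rightarrow> ('i \<Rightarrow> 'i \<Rightarrow> complex^'o^'o) set" where
  "span_fam P G = {X. \<exists>c. X = (\<lambda>i j. \<Sum>p\<in>P. msc (c p) (G p i j))}"

end

theory Submission
  imports Defs
begin


lemma theta_nth[simp]: "theta u v $ r $ s = u$r * cnj (v$s)"
  by (simp add: theta_def)
lemma cadj_nth[simp]: "cadj A $ i $ j = cnj (A$j$i)"
  by (simp add: cadj_def)
lemma msc_nth[simp]: "msc c A $ i $ j = c * A$i$j"
  by (simp add: msc_def)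
lemma mv_axis_nth[simp]: "((E::complex^'n^'m) *v axis j 1) $ r = E $ r $ j"
  by (simp add: matrix_vector_mult_def axis_def if_distrib cong: if_cong)

lemma cadj_cadj[simp]: "cadj (cadj A) = A" by (simp add: vec_eq_iff)
lemma cadj_add: "cadj (A + B) = cadj A + cadj B" by (simp add: vec_eq_iff)
lemma cadj_diff: "cadj (A - B) = cadj A - cadj B" by (simp add: vec_eq_iff)
lemma cadj_zero[simp]: "cadj 0 = 0" by (simp add: vec_eq_iff)
lemma cadj_sum: "cadj (sum f S) = sum (\<lambda>x. cadj (f x)) S"
  by (induct S rule: infinite_finite_induct) (auto simp: cadj_add)
lemma cadj_mult: "cadj ((A::complex^'n^'m) ** (B::complex^'k^'n)) = cadj B ** cadj A"
  by (simp add: vec_eq_iff matrix_matrix_mult_def mult.commute)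
lemma cadj_mat1[simp]: "cadj (mat 1 :: complex^'n^'n) = mat 1"
  by (simp add: vec_eq_iff mat_def)
lemma cadj_msc: "cadj (msc c A) = msc (cnj c) (cadj A)" by (simp add: vec_eq_iff)
lemma cadj_theta: "cadj (theta u v) = theta v u" by (simp add: vec_eq_iff mult.commute)

lemma axis_mult_l: "(axis r (1::complex)) $ k * x = (if k = r then x else 0)"
  by (simp add: axis_def)
lemma axis_mult_r: "x * (axis r (1::complex)) $ k = (if k = r then x else 0)"
  by (simp add: axis_def)
lemma cnj_axis: "cnj ((axis r (1::complex)) $ k) = (axis r 1) $ k"
  by (simp add: axis_def)

lemma if0_mult: "(if P then a else 0) * (b::complex) = (if P then a * b else 0)" by simp
lemma mult_if0: "(b::complex) * (if P then a else 0) = (if P then b * a else 0)" by simp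
lemma cnj_if01: "cnj (if P then 1 else 0) = (if P then 1 else (0::complex))" by simp
lemmas ifsimps = if0_mult mult_if0 axis_mult_l axis_mult_r cnj_axis

lemma theta_theta_axis: "theta u (axis r 1) ** theta (axis r 1) v = theta u v"
  by (simp add: vec_eq_iff matrix_matrix_mult_def mult.assoc ifsimps)
lemma theta_Z_theta: "theta u (axis r 1) ** Z ** theta (axis s 1) v = msc (Z$r$s) (theta u v)"
  by (simp add: vec_eq_iff matrix_matrix_mult_def sum_distrib_left sum_distrib_right
     mult.assoc ifsimps)
lemma axis_nth1: "axis j (1::complex) $ n = (if n = j then 1 else 0)"
  by (simp add: axis_def)
lemma mult_theta: "(A::complex^'n^'n) ** theta u v = theta (A *v u) v"
  by (simp add: vec_eq_iff matrix_matrix_mult_def matrix_vector_mult_def sum_distrib_left sum_distrib_right mult_ac)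
lemma theta_mult_cadj: "theta u v ** cadj (A::complex^'n^'n) = theta u (A *v v)"
  by (simp add: vec_eq_iff matrix_matrix_mult_def matrix_vector_mult_def sum_distrib_left sum_distrib_right mult_ac)
lemma munit_nth: "munit j i $ n $ k = (if n = j then if k = i then 1 else 0 else (0::complex))"
  by (simp add: munit_def axis_def)
lemma E_munit_E: "(E::complex^'i^'o) ** munit j i ** cadj E = theta (E *v axis j 1) (E *v axis i 1)"
  by (simp add: vec_eq_iff matrix_matrix_mult_def munit_nth if0_mult mult_if0 if_distrib[of "\<lambda>x. x * _"] if_distrib[of "\<lambda>x. _ * x"] cong: if_cong)


lemma balg_iff: "x \<in> balg bl \<longleftrightarrow> (\<forall>r s. bl r \<noteq> bl s \<longrightarrow> x$r$s = 0)"
  by (simp add: balg_def)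
lemma balg_zero[simp]: "0 \<in> balg bl" unfolding balg_iff by simp
lemma balg_add[simp]: "x \<in> balg bl \<Longrightarrow> y \<in> balg bl \<Longrightarrow> x + y \<in> balg bl" unfolding balg_iff by simp
lemma balg_diff[simp]: "x \<in> balg bl \<Longrightarrow> y \<in> balg bl \<Longrightarrow> x - y \<in> balg bl" unfolding balg_iff by simp
lemma balg_sum: "(\<And>k. k \<in> S \<Longrightarrow> f k \<in> balg bl) \<Longrightarrow> sum f S \<in> balg bl"
  by (induct S rule: infinite_finite_induct) auto
lemma balg_msc[simp]: "x \<in> balg bl \<Longrightarrow> msc c x \<in> balg bl" unfolding balg_iff by simp
lemma balg_cadj[simp]: "x \<in> balg bl \<Longrightarrow> cadj x \<in> balg bl" unfolding balg_iff by (metis cadj_nth complex_cnj_zero)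
lemma balg_mat1[simp]: "mat 1 \<in> balg bl" unfolding balg_iff by (auto simp: mat_def)
lemma balg_mult[simp]: "x \<in> balg bl \<Longrightarrow> y \<in> balg bl \<Longrightarrow> x ** y \<in> balg bl"
  unfolding balg_iff
proof (intro allI impI)
  fix r s assume x: "\<forall>r s. bl r \<noteq> bl s \<longrightarrow> x $ r $ s = 0" and y: "\<forall>r s. bl r \<noteq> bl s \<longrightarrow> y $ r $ s = 0"
    and rs: "bl r \<noteq> bl s"
  have "\<And>k. x $ r $ k * y $ k $ s = 0"
  proof -
    fix k show "x $ r $ k * y $ k $ s = 0"
      using x y rs by (cases "bl r = bl k") auto
  qed
  then have "(\<Sum>k\<in>UNIV. x $ r $ k * y $ k $ s) = 0" by (intro sum.neutral) blast
  then show "(x ** y) $ r $ s = 0" by (simp add: matrix_matrix_mult_def)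
qed

definition inblk :: "('n \<Rightarrow> 'a) \<Rightarrow> 'a \<Rightarrow> complex^'n \<Rightarrow> bool" where
  "inblk bl \<beta> u \<longleftrightarrow> (\<forall>r. u$r \<noteq> 0 \<longrightarrow> bl r = \<beta>)"
lemma theta_balg: "inblk bl \<beta> u \<Longrightarrow> inblk bl \<beta> v \<Longrightarrow> theta u v \<in> balg bl"
  by (auto simp: balg_def inblk_def)
lemma inblk_axis: "inblk bl (bl r) (axis r 1)"
  by (simp add: inblk_def axis_def)

lemma msc_add: "msc c (A + B) = msc c A + msc c B" by (simp add: vec_eq_iff algebra_simps)
lemma msc_zero[simp]: "msc c 0 = 0" by (simp add: vec_eq_iff)
lemma msc_sum: "msc c (sum f S) = (\<Sum>k\<in>S. msc c (f k))"
  by (induct S rule: infinite_finite_induct) (auto simp: msc_add)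
lemma msc_msc: "msc c (msc d A) = msc (c*d) A" by (simp add: vec_eq_iff)
lemma msc_1[simp]: "msc 1 A = A" by (simp add: vec_eq_iff)
lemma msc_mult_l: "msc c A ** B = msc c (A ** B)"
  by (simp add: vec_eq_iff matrix_matrix_mult_def sum_distrib_left mult_ac)
lemma msc_mult_r: "A ** msc c B = msc c (A ** B)"
  by (simp add: vec_eq_iff matrix_matrix_mult_def sum_distrib_left mult_ac)

locale hmod =
  fixes bout :: "'o::finite \<Rightarrow> 'b"
    and sc :: "complex \<Rightarrow> 'e::ab_group_add \<Rightarrow> 'e"
    and act :: "'e \<Rightarrow> complex^'o^'o \<Rightarrow> 'e"
    and ip :: "'e \<Rightarrow> 'e \<Rightarrow> complex^'o^'o"
  assumes H: "hilbert_opmod bout sc act ip"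
begin

lemma act_add1: "a \<in> balg bout \<Longrightarrow> act (x + y) a = act x a + act y a"
  by (rule H[unfolded hilbert_opmod_def, THEN conjunct2, THEN conjunct2, THEN conjunct2, THEN conjunct2, THEN conjunct1, rule_format])
lemma act_add2: "a \<in> balg bout \<Longrightarrow> b \<in> balg bout \<Longrightarrow> act x (a + b) = act x a + act x b"
  by (rule H[unfolded hilbert_opmod_def, THEN conjunct2, THEN conjunct2, THEN conjunct2, THEN conjunct2, THEN conjunct2, THEN conjunct1, rule_format])
lemma act_act: "a \<in> balg bout \<Longrightarrow> b \<in> balg bout \<Longrightarrow> act (act x a) b = act x (b ** a)"
  by (rule H[unfolded hilbert_opmod_def, THEN conjunct2, THEN conjunct2, THEN conjunct2, THEN conjunct2, THEN conjunct2, THEN conjunct2, THEN conjunct2, THEN conjunct1, rule_format])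
lemma ip_balg[simp]: "ip x y \<in> balg bout"
  by (rule H[unfolded hilbert_opmod_def, THEN conjunct2, THEN conjunct2, THEN conjunct2, THEN conjunct2, THEN conjunct2, THEN conjunct2, THEN conjunct2, THEN conjunct2, THEN conjunct2, THEN conjunct1, rule_format])
lemma ip_add_r: "ip x (y + z) = ip x y + ip x z"
  by (rule H[unfolded hilbert_opmod_def, THEN conjunct2, THEN conjunct2, THEN conjunct2, THEN conjunct2, THEN conjunct2, THEN conjunct2, THEN conjunct2, THEN conjunct2, THEN conjunct2, THEN conjunct2, THEN conjunct1, rule_format])
lemma ip_sc_r: "ip x (sc c y) = msc c (ip x y)"
  by (rule H[unfolded hilbert_opmod_def, THEN conjunct2, THEN conjunct2, THEN conjunct2, THEN conjunct2, THEN conjunct2, THEN conjunct2, THEN conjunct2, THEN conjunct2, THEN conjunct2, THEN conjunct2, THEN conjunct2, THEN conjunct1, rule_format])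
lemma ip_act_r: "a \<in> balg bout \<Longrightarrow> ip x (act y a) = a ** ip x y"
  by (rule H[unfolded hilbert_opmod_def, THEN conjunct2, THEN conjunct2, THEN conjunct2, THEN conjunct2, THEN conjunct2, THEN conjunct2, THEN conjunct2, THEN conjunct2, THEN conjunct2, THEN conjunct2, THEN conjunct2, THEN conjunct2, THEN conjunct1, rule_format])
lemma ip_herm: "ip y x = cadj (ip x y)"
  by (rule H[unfolded hilbert_opmod_def, THEN conjunct2, THEN conjunct2, THEN conjunct2, THEN conjunct2, THEN conjunct2, THEN conjunct2, THEN conjunct2, THEN conjunct2, THEN conjunct2, THEN conjunct2, THEN conjunct2, THEN conjunct2, THEN conjunct2, THEN conjunct1, rule_format])
lemma ip_psd: "psd (ip x x)"
  by (rule H[unfolded hilbert_opmod_def, THEN conjunct2, THEN conjunct2, THEN conjunct2, THEN conjunct2, THEN conjunct2, THEN conjunct2, THEN conjunct2, THEN conjunct2, THEN conjunct2, THEN conjunct2, THEN conjunct2, THEN conjunct2, THEN conjunct2, THEN conjunct2, THEN conjunct1, rule_format])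
lemma ip_nondeg: "ip x x = 0 \<Longrightarrow> x = 0"
  by (rule H[unfolded hilbert_opmod_def, THEN conjunct2, THEN conjunct2, THEN conjunct2, THEN conjunct2, THEN conjunct2, THEN conjunct2, THEN conjunct2, THEN conjunct2, THEN conjunct2, THEN conjunct2, THEN conjunct2, THEN conjunct2, THEN conjunct2, THEN conjunct2, THEN conjunct2, THEN conjunct1, rule_format])

lemma cadj_ip[simp]: "cadj (ip x y) = ip y x"
  by (rule ip_herm[symmetric])

lemma ip_zero_r[simp]: "ip x 0 = 0"
  using ip_add_r[of x 0 0] by simp
lemma ip_sum_r: "ip x (sum f S) = (\<Sum>k\<in>S. ip x (f k))"
  by (induct S rule: infinite_finite_induct) (auto simp: ip_add_r)
lemma ip_add_l: "ip (x + y) z = ip x z + ip y z"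
  by (subst ip_herm) (simp add: ip_add_r cadj_add)
lemma ip_zero_l[simp]: "ip 0 x = 0"
  using ip_add_l[of 0 0 x] by simp
lemma ip_sum_l: "ip (sum f S) z = (\<Sum>k\<in>S. ip (f k) z)"
  by (induct S rule: infinite_finite_induct) (auto simp: ip_add_l)
lemma ip_diff_l: "ip (x - y) z = ip x z - ip y z"
  using ip_add_l[of "x - y" y z] by (simp add: algebra_simps)
lemma ip_diff_r: "ip z (x - y) = ip z x - ip z y"
  using ip_add_r[of z "x - y" y] by (simp add: algebra_simps)
lemma ip_act_l: "a \<in> balg bout \<Longrightarrow> ip (act x a) y = ip x y ** cadj a"
  by (subst ip_herm) (simp add: ip_act_r cadj_mult)
lemma ip_sc_l: "ip (sc c x) y = msc (cnj c) (ip x y)"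
  by (subst ip_herm) (simp add: ip_sc_r cadj_msc)
lemma ip_ext: assumes "\<And>z. ip x z = ip y z" shows "x = y"
proof -
  have "ip (x - y) (x - y) = 0" using assms by (simp add: ip_diff_l)
  then have "x - y = 0" by (rule ip_nondeg)
  then show ?thesis by simp
qed
lemma act_zero1[simp]: "a \<in> balg bout \<Longrightarrow> act 0 a = 0"
  using act_add1[of a 0 0] by simp
lemma act_sum1: "a \<in> balg bout \<Longrightarrow> act (sum f S) a = (\<Sum>k\<in>S. act (f k) a)"
  by (induct S rule: infinite_finite_induct) (auto simp: act_add1)
lemma act_zero2[simp]: "act x 0 = 0"
  using act_add2[of 0 0 x] by simp
lemma act_sum2: "(\<And>k. k \<in> S \<Longrightarrow> f k \<in> balg bout) \<Longrightarrow> act x (sum f S) = (\<Sum>k\<in>S. act x (f k))"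
  by (induct S rule: infinite_finite_induct) (auto simp: act_add2 balg_sum)

end



lemma kraus_supp:
  assumes "kraus_related bin bout \<Phi> K E" "m \<in> K" "E m $ r $ s \<noteq> 0"
  shows "bout r = fst (snd m) \<and> bin s = fst m"
proof -
  obtain a b k where m: "m = (a,b,k)" by (cases m) auto
  from assms show ?thesis unfolding kraus_related_def m by fastforce
qed

lemma sum_nth2: "(sum f S) $ r $ s = (\<Sum>x\<in>S. f x $ r $ s)"
  by (induct S rule: infinite_finite_induct) auto

lemma Cmat_formula:
  assumes QC: "quantum_channel bin bout \<Phi>" and KR: "kraus_related bin bout \<Phi> K E"
  shows "Cmat bin \<Phi> i j = (\<Sum>m\<in>K. theta (E m *v axis j 1) (E m *v axis i 1))"
proof -
  have finK: "finite K" using KR by (simp add: kraus_related_def)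
  have supp: "\<And>m r s. m \<in> K \<Longrightarrow> E m $ r $ s \<noteq> 0 \<Longrightarrow> bout r = fst (snd m) \<and> bin s = fst m"
    using kraus_supp[OF KR] by blast
  have kr: "\<And>a b x. (\<forall>r s. x$r$s \<noteq> 0 \<longrightarrow> bin r = a \<and> bin s = a) \<Longrightarrow>
        bcompress bout b (\<Phi> x) = (\<Sum>k\<in>{k. (a,b,k) \<in> K}. E (a,b,k) ** x ** cadj (E (a,b,k)))"
    using KR by (simp add: kraus_related_def)
  have qc: "\<And>x. x \<in> balg bin \<Longrightarrow> \<Phi> x \<in> balg bout"
    using QC by (simp add: quantum_channel_def)
  show ?thesis
  proof (simp add: vec_eq_iff sum_nth2, intro allI)
    fix r s
    show "Cmat bin \<Phi> i j $ r $ s = (\<Sum>m\<in>K. E m $ r $ j * cnj (E m $ s $ i))"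
    proof (cases "bin i = bin j")
      case False
      have "E m $ r $ j * cnj (E m $ s $ i) = 0" if "m \<in> K" for m
        using supp[OF that, of r j] supp[OF that, of s i] False by (cases "E m $ r $ j = 0") auto
      then have "(\<Sum>m\<in>K. E m $ r $ j * cnj (E m $ s $ i)) = 0" by (intro sum.neutral) blast
      then show ?thesis using False by (simp add: Cmat_def)
    next
      case True
      define a where "a = bin j"
      define x where "x = munit j i"
      have xs: "\<forall>r s. x$r$s \<noteq> 0 \<longrightarrow> bin r = a \<and> bin s = a"
        using True by (auto simp: x_def munit_nth a_def split: if_splits)
      have xb: "x \<in> balg bin" using xs unfolding balg_iff by metis
      have C: "Cmat bin \<Phi> i j = \<Phi> x" using True by (simp add: Cmat_def x_def)
      show ?thesis
      proof (cases "bout s = bout r")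
        case False
        have "E m $ r $ j * cnj (E m $ s $ i) = 0" if "m \<in> K" for m
          using supp[OF that, of r j] supp[OF that, of s i] False by (cases "E m $ r $ j = 0") auto
        then have "(\<Sum>m\<in>K. E m $ r $ j * cnj (E m $ s $ i)) = 0" by (intro sum.neutral) blast
        moreover have "\<Phi> x $ r $ s = 0" using qc[OF xb] False by (auto simp: balg_iff)
        ultimately show ?thesis using C by simp
      next
        case bs: True
        define \<beta> where "\<beta> = bout r"
        have "\<Phi> x $ r $ s = bcompress bout \<beta> (\<Phi> x) $ r $ s"
          using bs by (simp add: bcompress_def \<beta>_def)
        also have "\<dots> = (\<Sum>k\<in>{k. (a,\<beta>,k) \<in> K}. (E (a,\<beta>,k) ** x ** cadj (E (a,\<beta>,k))) $ r $ s)"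
          using kr[OF xs] by (simp add: sum_nth2)
        also have "\<dots> = (\<Sum>k\<in>{k. (a,\<beta>,k) \<in> K}. E (a,\<beta>,k) $ r $ j * cnj (E (a,\<beta>,k) $ s $ i))"
          by (simp add: x_def E_munit_E)
        also have "\<dots> = (\<Sum>m\<in>(\<lambda>k. (a,\<beta>,k)) ` {k. (a,\<beta>,k) \<in> K}. E m $ r $ j * cnj (E m $ s $ i))"
          by (subst sum.reindex) (auto simp: inj_on_def)
        also have "\<dots> = (\<Sum>m\<in>K. E m $ r $ j * cnj (E m $ s $ i))"
        proof (rule sum.mono_neutral_left[OF finK])
          show "(\<lambda>k. (a, \<beta>, k)) ` {k. (a, \<beta>, k) \<in> K} \<subseteq> K" by auto
          show "\<forall>m\<in>K - (\<lambda>k. (a, \<beta>, k)) ` {k. (a, \<beta>, k) \<in> K}. E m $ r $ j * cnj (E m $ s $ i) = 0"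
          proof
            fix m assume m: "m \<in> K - (\<lambda>k. (a, \<beta>, k)) ` {k. (a, \<beta>, k) \<in> K}"
            show "E m $ r $ j * cnj (E m $ s $ i) = 0"
            proof (rule ccontr)
              assume "E m $ r $ j * cnj (E m $ s $ i) \<noteq> 0"
              then have "E m $ r $ j \<noteq> 0" by auto
              then have "bout r = fst (snd m) \<and> bin j = fst m" using supp m by blast
              then have "m = (a, \<beta>, snd (snd m))" by (simp add: a_def \<beta>_def prod_eq_iff)
              then show False using m by (metis (mono_tags, lifting) DiffD1 DiffD2 image_eqI mem_Collect_eq)
            qed
          qed
        qed
        finally show ?thesis using C by simp
      qed
    qed
  qed
qed




lemma matrix_sum_r: "(A::complex^'n^'m) ** sum f S = (\<Sum>k\<in>S. A ** f k)"
  by (induct S rule: infinite_finite_induct) (auto simp: matrix_add_ldistrib)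
lemma matrix_add_rdistrib: "((B + C) ** A) = (B ** A) + (C ** A)"
  by (vector matrix_matrix_mult_def sum.distrib[symmetric] field_simps)
lemma matrix_sum_l: "sum f S ** (A::complex^'n^'m) = (\<Sum>k\<in>S. f k ** A)"
  by (induct S rule: infinite_finite_induct) (auto simp: matrix_add_rdistrib)
lemma theta_sum_l: "theta (sum u S) v = (\<Sum>k\<in>S. theta (u k) v)"
  by (induct S rule: infinite_finite_induct) (auto simp: vec_eq_iff theta_def algebra_simps)
lemma theta_zero_l[simp]: "theta 0 v = 0" by (simp add: vec_eq_iff)
lemma theta_zero_r[simp]: "theta u 0 = 0" by (simp add: vec_eq_iff)

definition ti :: "('i \<Rightarrow> complex^'o^'o) \<Rightarrow> ('i \<Rightarrow> complex^'o^'o) \<Rightarrow> complex" where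
  "ti X Y = (\<Sum>i\<in>UNIV. \<Sum>r\<in>UNIV. \<Sum>s\<in>UNIV. cnj (X i $ r $ s) * Y i $ r $ s)"

lemma inner_complex_Re: "inner (a::complex) b = Re (cnj a * b)"
  by (simp add: inner_complex_def)

lemma inner_vv: "inner (vec_lambda X :: complex^'o^'o^'i) (vec_lambda Y) = Re (ti X Y)"
  by (simp add: ti_def inner_vec_def inner_complex_Re Re_sum)

lemma ti_add_r: "ti X (\<lambda>i. A i + B i) = ti X A + ti X B"
  by (simp add: ti_def algebra_simps sum.distrib)
lemma ti_zero_r: "ti X (\<lambda>i. 0) = 0"
  by (simp add: ti_def)
lemma ti_sum_r: "ti X (\<lambda>i. \<Sum>m\<in>K. h m i) = (\<Sum>m\<in>K. ti X (h m))"
proof (induct K rule: infinite_finite_induct)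
  case (infinite A) then show ?case by (simp add: ti_zero_r)
next
  case empty then show ?case by (simp add: ti_zero_r)
next
  case (insert x F)
  then show ?case by (simp add: ti_add_r)
qed
lemma ti_cnj: "ti Y X = cnj (ti X Y)"
  by (simp add: ti_def mult.commute)

lemma ti_theta: "ti z (\<lambda>i. theta u (F i)) = (\<Sum>r\<in>UNIV. u$r * cnj ((\<Sum>i\<in>UNIV. z i *v F i) $ r))"
proof -
  have "ti z (\<lambda>i. theta u (F i)) = (\<Sum>i\<in>UNIV. \<Sum>r\<in>UNIV. \<Sum>s\<in>UNIV. u$r * cnj (z i $ r $ s * F i $ s))"
    by (simp add: ti_def mult_ac)
  also have "\<dots> = (\<Sum>r\<in>UNIV. \<Sum>i\<in>UNIV. \<Sum>s\<in>UNIV. u$r * cnj (z i $ r $ s * F i $ s))"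
    by (rule sum.swap)
  also have "\<dots> = (\<Sum>r\<in>UNIV. u$r * cnj ((\<Sum>i\<in>UNIV. z i *v F i) $ r))"
    by (simp add: sum_distrib_left matrix_vector_mult_def)
  finally show ?thesis .
qed

lemma opX_CF:
  assumes CF: "\<And>i j. Cm i j = (\<Sum>m\<in>K. theta (f m j) (f m i))"
  shows "opX Cm z = (\<lambda>i. \<Sum>m\<in>K. theta (\<Sum>j\<in>UNIV. z j *v f m j) (f m i))"
proof
  fix i
  have "opX Cm z i = (\<Sum>j\<in>UNIV. \<Sum>m\<in>K. theta (z j *v f m j) (f m i))"
    by (simp add: opX_def CF matrix_sum_r mult_theta)
  also have "\<dots> = (\<Sum>m\<in>K. \<Sum>j\<in>UNIV. theta (z j *v f m j) (f m i))"
    by (rule sum.swap)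
  also have "\<dots> = (\<Sum>m\<in>K. theta (\<Sum>j\<in>UNIV. z j *v f m j) (f m i))"
    by (simp add: theta_sum_l)
  finally show "opX Cm z i = (\<Sum>m\<in>K. theta (\<Sum>j\<in>UNIV. z j *v f m j) (f m i))" .
qed


lemma scaleR_mat_left: "(c *\<^sub>R (A::complex^'n^'m)) ** B = c *\<^sub>R (A ** B)"
  by (simp add: vec_eq_iff matrix_matrix_mult_def scaleR_sum_right)
lemma balg_scaleR: "x \<in> balg bl \<Longrightarrow> c *\<^sub>R x \<in> balg bl"
  by (simp add: balg_iff)
lemma Re_mult_cnj: "Re (a * cnj a) = (cmod a)^2"
  using complex_norm_square[of a] by (metis Re_complex_of_real)

lemma cmod_sq_ReIm: "Re a * Re a + Im a * Im a = (cmod a)^2"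
  by (subst cmod_power2) (simp add: power2_eq_square)

lemma preimage_exists:
  fixes Cm :: "'i::finite \<Rightarrow> 'i \<Rightarrow> complex^'o::finite^'o" and f :: "'k \<Rightarrow> 'i \<Rightarrow> complex^'o"
  assumes finK: "finite K"
    and CF: "\<And>i j. Cm i j = (\<Sum>m\<in>K. theta (f m j) (f m i))"
    and Cb: "\<And>i j. Cm i j \<in> balg bout"
    and m0: "m0 \<in> K" and vb: "\<And>i. theta g (f m0 i) \<in> balg bout"
  shows "\<exists>x\<in>Mcar bout. opX Cm x = (\<lambda>i. theta g (f m0 i))"
proof -
  define v where "v = (\<lambda>i. theta g (f m0 i))"
  define LC :: "complex^'o^'o^'i \<Rightarrow> complex^'o^'o^'i" where "LC X = (\<chi> i. opX Cm (($) X) i)" for X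
  define Mv :: "(complex^'o^'o^'i) set" where "Mv = {X. \<forall>i. X$i \<in> balg bout}"
  define S where "S = LC ` Mv"
  have LC_add: "LC (X + Y) = LC X + LC Y" for X Y
    by (simp add: LC_def opX_def vec_eq_iff matrix_add_rdistrib sum.distrib)
  have LC_scale: "LC (c *\<^sub>R X) = c *\<^sub>R LC X" for c X
    by (simp add: LC_def opX_def vec_eq_iff scaleR_mat_left scaleR_sum_right)
  have LC_zero: "LC 0 = 0"
    by (simp add: LC_def opX_def vec_eq_iff)
  have Mv_sub: "subspace Mv"
    unfolding subspace_def Mv_def by (auto intro: balg_scaleR)
  have LCMv: "LC X \<in> Mv" if "X \<in> Mv" for X
    using that Cb by (auto simp: Mv_def LC_def opX_def intro!: balg_sum)
  have subS: "subspace S"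
    unfolding subspace_def S_def
  proof (intro conjI ballI allI)
    show "0 \<in> LC ` Mv" using LC_zero Mv_sub by (metis image_eqI subspace_0)
  next
    fix x y assume "x \<in> LC ` Mv" "y \<in> LC ` Mv"
    then obtain X Y where "X \<in> Mv" "Y \<in> Mv" "x = LC X" "y = LC Y" by blast
    then show "x + y \<in> LC ` Mv" using LC_add Mv_sub by (metis image_eqI subspace_add)
  next
    fix c x assume "x \<in> LC ` Mv"
    then obtain X where "X \<in> Mv" "x = LC X" by blast
    then show "c *\<^sub>R x \<in> LC ` Mv" using LC_scale Mv_sub by (metis image_eqI subspace_mul)
  qed
  obtain y z where y: "y \<in> span S" and orth: "\<And>w. w \<in> span S \<Longrightarrow> orthogonal z w"
    and dec: "vec_lambda v = y + z"
    by (rule orthogonal_subspace_decomp_exists[of S "vec_lambda v"]) blast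
  have spanS: "span S = S" using subS by simp
  have "y \<in> S" using y spanS by simp
  then obtain X0 where X0: "X0 \<in> Mv" "y = LC X0" unfolding S_def by blast
  have vMv: "vec_lambda v \<in> Mv" using vb by (simp add: Mv_def v_def)
  have zeq: "z = vec_lambda v - LC X0" using dec X0 by simp
  have zMv: "z \<in> Mv" using zeq vMv LCMv[OF X0(1)] Mv_sub by (simp add: subspace_diff)
  have "LC z \<in> S" using zMv S_def by simp
  then have "orthogonal z (LC z)" using orth spanS by simp
  then have iz: "inner z (LC z) = 0" by (simp add: orthogonal_def)
  define zz where "zz = ($) z"
  have zvl: "z = vec_lambda zz" by (simp add: zz_def vec_lambda_eta)
  have LCz: "LC z = vec_lambda (opX Cm zz)" by (simp add: LC_def zz_def vec_lambda_eta)
  define R where "R m = (\<Sum>j\<in>UNIV. zz j *v f m j)" for m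
  have "inner z (LC z) = Re (ti zz (opX Cm zz))" using zvl LCz inner_vv by metis
  also have "\<dots> = Re (\<Sum>m\<in>K. ti zz (\<lambda>i. theta (R m) (f m i)))"
    by (simp add: opX_CF[OF CF] R_def ti_sum_r)
  also have "\<dots> = (\<Sum>m\<in>K. \<Sum>r\<in>UNIV. (cmod (R m $ r))^2)"
    by (simp add: ti_theta R_def[symmetric] Re_sum cmod_sq_ReIm)
  finally have "(\<Sum>m\<in>K. \<Sum>r\<in>UNIV. (cmod (R m $ r))^2) = 0" using iz by simp
  then have "\<forall>m\<in>K. (\<Sum>r\<in>UNIV. (cmod (R m $ r))^2) = 0"
    using finK by (subst (asm) sum_nonneg_eq_0_iff) (auto intro: sum_nonneg)
  then have "(\<Sum>r\<in>UNIV. (cmod (R m0 $ r))^2) = 0" using m0 by blast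
  then have R0: "\<forall>r. R m0 $ r = 0" by (subst (asm) sum_nonneg_eq_0_iff) auto
  have "inner (vec_lambda v) z = Re (ti v zz)" using zvl inner_vv by metis
  also have "\<dots> = Re (cnj (ti zz v))" by (simp add: ti_cnj[of v zz])
  also have "\<dots> = 0" by (simp add: v_def ti_theta R_def[symmetric] R0)
  finally have i1: "inner (vec_lambda v) z = 0" .
  have "orthogonal z y" using orth y by simp
  then have i2: "inner y z = 0" by (simp add: orthogonal_def inner_commute)
  have "inner z z = inner (vec_lambda v) z - inner y z" using zeq X0 by (simp add: inner_diff_left)
  then have "inner z z = 0" using i1 i2 by simp
  then have "z = 0" by simp
  then have "vec_lambda v = LC X0" using dec X0 by simp
  then have "v = opX Cm (($) X0)"
    by (simp add: LC_def)
  moreover have "($) X0 \<in> Mcar bout" using X0 by (simp add: Mcar_def Mv_def)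
  ultimately show ?thesis unfolding v_def by metis
qed



definition delt :: "'i \<Rightarrow> 'i \<Rightarrow> complex^'o^'o" where
  "delt j = (\<lambda>t. if t = j then mat 1 else 0)"

lemma delt_Mcar: "delt j \<in> Mcar bout"
  by (simp add: Mcar_def delt_def)

lemma Mip_delt: "Mip (delt i) (z :: 'i::finite \<Rightarrow> complex^'o^'o) = z i"
proof -
  have "Mip (delt i) z = (\<Sum>t\<in>UNIV. if t = i then z t else 0)"
    unfolding Mip_def delt_def by (rule sum.cong) auto
  also have "\<dots> = z i" using sum.delta[OF finite, of i z] by simp
  finally show ?thesis .
qed

lemma opX_delt: "opX X (delt (j::'i::finite) :: 'i \<Rightarrow> complex^'o^'o) = (\<lambda>i. X i j)"
proof
  fix i
  have "opX X (delt j) i = (\<Sum>t\<in>UNIV. if t = j then X i t else 0)"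
    unfolding opX_def delt_def by (rule sum.cong) auto
  also have "\<dots> = X i j" using sum.delta[OF finite, of j "X i"] by simp
  finally show "opX X (delt j) i = X i j" .
qed

locale qsetup = hmod bout sc act ip
  for bout :: "'o::finite \<Rightarrow> 'b" and sc :: "complex \<Rightarrow> 'e::ab_group_add \<Rightarrow> 'e" and act ip +
  fixes bin :: "'i::finite \<Rightarrow> 'a" and K :: "('a \<times> 'b \<times> 'k) set" and E :: "'a \<times> 'b \<times> 'k \<Rightarrow> complex^'i^'o"
    and Cm :: "'i \<Rightarrow> 'i \<Rightarrow> complex^'o^'o" and W :: "('i \<Rightarrow> complex^'o^'o) \<Rightarrow> 'e"
    and W' :: "'e \<Rightarrow> ('i \<Rightarrow> complex^'o^'o)"
  assumes finK: "finite K"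
    and supp: "\<And>m r s. m \<in> K \<Longrightarrow> E m $ r $ s \<noteq> 0 \<Longrightarrow> bout r = fst (snd m) \<and> bin s = fst m"
    and CF: "\<And>i j. Cm i j = (\<Sum>m\<in>K. theta (E m *v axis j 1) (E m *v axis i 1))"
    and AW: "adjoint_pair (Mcar bout) UNIV Mip ip W W'"
    and WW: "\<And>v. v \<in> Mcar bout \<Longrightarrow> W' (W v) = opX Cm v"
begin

definition w where "w j = W (delt j)"
abbreviation f where "f m j \<equiv> E m *v axis j 1"
definition rb where "rb \<beta> = (SOME r. bout r = \<beta>)"
definition g where "g m = axis (rb (fst (snd m))) (1::complex)"

lemma f_inblk: "m \<in> K \<Longrightarrow> inblk bout (bout (rb (fst (snd m)))) (f m j)"
  unfolding inblk_def
proof (intro allI impI)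
  fix r assume m: "m \<in> K" and "f m j $ r \<noteq> 0"
  then have "E m $ r $ j \<noteq> 0" by simp
  then have b: "bout r = fst (snd m)" using supp[OF m] by blast
  then have "bout (rb (fst (snd m))) = fst (snd m)" unfolding rb_def by (rule someI)
  then show "bout r = bout (rb (fst (snd m)))" using b by simp
qed

lemma g_inblk: "inblk bout (bout (rb (fst (snd m)))) (g m)"
  unfolding g_def by (rule inblk_axis)

lemma Cm_balg[simp]: "Cm i j \<in> balg bout"
  unfolding CF by (intro balg_sum theta_balg[OF f_inblk f_inblk])

lemma Cm_herm: "cadj (Cm i j) = Cm j i"
  unfolding CF by (simp add: cadj_sum cadj_theta)

lemma v_balg: "m \<in> K \<Longrightarrow> theta (g m) (f m i) \<in> balg bout"
  by (rule theta_balg[OF g_inblk f_inblk])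

lemma a_balg: "m \<in> K \<Longrightarrow> theta (f m i) (g m) \<in> balg bout"
  by (rule theta_balg[OF f_inblk g_inblk])

lemma Wadj: "x \<in> Mcar bout \<Longrightarrow> ip (W x) y = Mip x (W' y)"
  using AW by (simp add: adjoint_pair_def)

lemma W'_formula:
  assumes "adjoint_pair (Mcar bout) UNIV Mip ip W W''"
  shows "W'' y = (\<lambda>i. ip (w i) y)"
proof
  fix i
  have "ip (w i) y = Mip (delt i) (W'' y)"
    using assms delt_Mcar[of i bout] unfolding w_def adjoint_pair_def by simp
  then show "W'' y i = ip (w i) y" by (simp add: Mip_delt)
qed

lemma Mcar_balg: "v \<in> Mcar bout \<Longrightarrow> v j \<in> balg bout"
  by (simp add: Mcar_def)

lemma W_expand: assumes v: "v \<in> Mcar bout" shows "W v = (\<Sum>j\<in>UNIV. act (w j) (v j))"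
proof (rule ip_ext)
  fix y
  have "ip (W v) y = Mip v (W' y)" by (rule Wadj[OF v])
  also have "\<dots> = (\<Sum>j\<in>UNIV. ip (w j) y ** cadj (v j))"
    by (simp add: Mip_def W'_formula[OF AW])
  also have "\<dots> = (\<Sum>j\<in>UNIV. ip (act (w j) (v j)) y)"
    using Mcar_balg[OF v] by (simp add: ip_act_l)
  also have "\<dots> = ip (\<Sum>j\<in>UNIV. act (w j) (v j)) y"
    by (simp add: ip_sum_l)
  finally show "ip (W v) y = ip (\<Sum>j\<in>UNIV. act (w j) (v j)) y" .
qed

lemma ip_W_W: "a \<in> Mcar bout \<Longrightarrow> b \<in> Mcar bout \<Longrightarrow> ip (W a) (W b) = Mip a (opX Cm b)"
  by (simp add: Wadj WW)

lemma ip_w_w: "ip (w i) (w j) = Cm i j"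
  unfolding w_def by (simp add: ip_W_W delt_Mcar opX_delt Mip_delt)

definition xpre where "xpre m = (SOME x. x \<in> Mcar bout \<and> opX Cm x = (\<lambda>i. theta (g m) (f m i)))"
definition y where "y m = W (xpre m)"

lemma xpre_prop: assumes m: "m \<in> K"
  shows "xpre m \<in> Mcar bout \<and> opX Cm (xpre m) = (\<lambda>i. theta (g m) (f m i))"
proof -
  have "\<exists>x\<in>Mcar bout. opX Cm x = (\<lambda>i. theta (g m) (f m i))"
    by (rule preimage_exists[where f="\<lambda>m j. E m *v axis j 1", OF finK CF Cm_balg m v_balg[OF m]])
  then show ?thesis unfolding xpre_def by (rule someI2_bex) blast
qed

lemma ip_y_w: assumes m: "m \<in> K" shows "ip (y m) (w j) = theta (f m j) (g m)"
proof -
  have xM: "xpre m \<in> Mcar bout" and xC: "opX Cm (xpre m) = (\<lambda>i. theta (g m) (f m i))"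
    using xpre_prop[OF m] by auto
  have "ip (y m) (w j) = Mip (xpre m) (opX Cm (delt j))"
    by (simp add: y_def w_def ip_W_W xM delt_Mcar)
  also have "\<dots> = (\<Sum>i\<in>UNIV. Cm i j ** cadj (xpre m i))"
    by (simp add: Mip_def opX_delt)
  also have "\<dots> = cadj (\<Sum>i\<in>UNIV. xpre m i ** Cm j i)"
    by (simp add: cadj_sum cadj_mult Cm_herm)
  also have "(\<Sum>i\<in>UNIV. xpre m i ** Cm j i) = opX Cm (xpre m) j"
    by (simp add: opX_def)
  also have "\<dots> = theta (g m) (f m j)" using xC by simp
  finally show ?thesis by (simp add: cadj_theta)
qed

lemma T_adj: "adjoint_pair UNIV UNIV ip ip T T' \<Longrightarrow> ip (T x) z = ip x (T' z)"
  by (simp add: adjoint_pair_def)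

lemma T_adj2: assumes "adjoint_pair UNIV UNIV ip ip T T'" shows "ip x (T z) = ip (T' x) z"
proof -
  have "ip x (T z) = cadj (ip (T z) x)" by (rule ip_herm)
  also have "\<dots> = cadj (ip z (T' x))" using T_adj[OF assms] by simp
  finally show ?thesis by simp
qed

lemma T_lin:
  assumes adj: "adjoint_pair UNIV UNIV ip ip T T'" and a: "\<And>k. k \<in> S \<Longrightarrow> a k \<in> balg bout"
  shows "T (\<Sum>k\<in>S. act (u k) (a k)) = (\<Sum>k\<in>S. act (T (u k)) (a k))"
proof (rule ip_ext)
  fix z
  have "ip (T (\<Sum>k\<in>S. act (u k) (a k))) z = ip (\<Sum>k\<in>S. act (u k) (a k)) (T' z)"
    by (rule T_adj[OF adj])
  also have "\<dots> = (\<Sum>k\<in>S. ip (u k) (T' z) ** cadj (a k))"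
    using a by (simp add: ip_sum_l ip_act_l)
  also have "\<dots> = (\<Sum>k\<in>S. ip (T (u k)) z ** cadj (a k))"
    using T_adj[OF adj] by simp
  also have "\<dots> = ip (\<Sum>k\<in>S. act (T (u k)) (a k)) z"
    using a by (simp add: ip_sum_l ip_act_l)
  finally show "ip (T (\<Sum>k\<in>S. act (u k) (a k))) z = ip (\<Sum>k\<in>S. act (T (u k)) (a k)) z" .
qed

lemma conf_iff: "X \<in> confus_multigraph_of bout ip W \<longleftrightarrow>
   (\<forall>i j. X i j \<in> balg bout) \<and>
   (\<exists>T T'. adjoint_pair UNIV UNIV ip ip T T' \<and> (\<forall>i j. X i j = ip (w i) (T (w j))))"
proof
  assume "X \<in> confus_multigraph_of bout ip W"
  then obtain T T' W'' where Xb: "\<forall>i j. X i j \<in> balg bout" and adj: "adjoint_pair UNIV UNIV ip ip T T'"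
    and adjW: "adjoint_pair (Mcar bout) UNIV Mip ip W W''"
    and eq: "\<forall>v\<in>Mcar bout. W'' (T (W v)) = opX X v"
    unfolding confus_multigraph_of_def by blast
  have "X i j = ip (w i) (T (w j))" for i j
  proof -
    have "W'' (T (w j)) = opX X (delt j)" using eq delt_Mcar[of j bout] by (simp add: w_def)
    then have "W'' (T (w j)) i = X i j" by (simp add: opX_delt)
    then show ?thesis by (simp add: W'_formula[OF adjW])
  qed
  then show "(\<forall>i j. X i j \<in> balg bout) \<and>
   (\<exists>T T'. adjoint_pair UNIV UNIV ip ip T T' \<and> (\<forall>i j. X i j = ip (w i) (T (w j))))"
    using Xb adj by blast
next
  assume "(\<forall>i j. X i j \<in> balg bout) \<and>
   (\<exists>T T'. adjoint_pair UNIV UNIV ip ip T T' \<and> (\<forall>i j. X i j = ip (w i) (T (w j))))"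
  then obtain T T' where Xb: "\<forall>i j. X i j \<in> balg bout" and adj: "adjoint_pair UNIV UNIV ip ip T T'"
    and XT: "\<And>i j. X i j = ip (w i) (T (w j))" by blast
  have "W' (T (W v)) = opX X v" if v: "v \<in> Mcar bout" for v
  proof
    fix i
    have "W' (T (W v)) i = ip (w i) (T (W v))" by (simp add: W'_formula[OF AW])
    also have "\<dots> = ip (T' (w i)) (W v)" by (rule T_adj2[OF adj])
    also have "\<dots> = ip (T' (w i)) (\<Sum>j\<in>UNIV. act (w j) (v j))" by (simp add: W_expand[OF v])
    also have "\<dots> = (\<Sum>j\<in>UNIV. v j ** ip (T' (w i)) (w j))"
      using Mcar_balg[OF v] by (simp add: ip_sum_r ip_act_r)
    also have "\<dots> = (\<Sum>j\<in>UNIV. v j ** X i j)"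
      by (simp add: XT T_adj2[OF adj])
    also have "\<dots> = opX X v i" by (simp add: opX_def)
    finally show "W' (T (W v)) i = opX X v i" .
  qed
  then show "X \<in> confus_multigraph_of bout ip W"
    unfolding confus_multigraph_of_def using Xb adj AW by blast
qed

lemma gen:
  assumes m1: "m1 \<in> K" and m2: "m2 \<in> K" and b: "fst (snd m1) = fst (snd m2)"
  shows "\<exists>T T'. adjoint_pair UNIV UNIV ip ip T T' \<and> (\<forall>i j. theta (f m2 j) (f m1 i) = ip (w i) (T (w j)))"
proof -
  define T where "T z = act (y m1) (ip (y m2) z)" for z
  define T' where "T' z = act (y m2) (ip (y m1) z)" for z
  have adj: "adjoint_pair UNIV UNIV ip ip T T'"
    unfolding adjoint_pair_def T_def T'_def by (simp add: ip_act_l ip_act_r)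
  have "theta (f m2 j) (f m1 i) = ip (w i) (T (w j))" for i j
  proof -
    have "ip (w i) (T (w j)) = ip (y m2) (w j) ** ip (w i) (y m1)"
      by (simp add: T_def ip_act_r)
    also have "ip (w i) (y m1) = cadj (ip (y m1) (w i))" by simp
    also have "\<dots> = theta (g m1) (f m1 i)" by (simp add: ip_y_w[OF m1] cadj_theta)
    also have "ip (y m2) (w j) = theta (f m2 j) (g m1)" by (simp add: ip_y_w[OF m2] g_def b)
    finally show ?thesis by (simp add: g_def theta_theta_axis)
  qed
  then show ?thesis using adj by blast
qed

lemma span_sub:
  assumes P: "finite P"
    and G: "\<And>p. p \<in> P \<Longrightarrow> \<exists>T T'. adjoint_pair UNIV UNIV ip ip T T' \<and> (\<forall>i j. G p i j = ip (w i) (T (w j)))"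
  shows "\<exists>T T'. adjoint_pair UNIV UNIV ip ip T T' \<and> (\<forall>i j. (\<Sum>p\<in>P. msc (c p) (G p i j)) = ip (w i) (T (w j)))"
proof -
  have "\<forall>p\<in>P. \<exists>TT. adjoint_pair UNIV UNIV ip ip (fst TT) (snd TT) \<and> (\<forall>i j. G p i j = ip (w i) (fst TT (w j)))"
    using G by fastforce
  then obtain TT where TT: "\<And>p. p \<in> P \<Longrightarrow> adjoint_pair UNIV UNIV ip ip (fst (TT p)) (snd (TT p)) \<and> (\<forall>i j. G p i j = ip (w i) (fst (TT p) (w j)))"
    by metis
  define T where "T z = (\<Sum>p\<in>P. sc (c p) (fst (TT p) z))" for z
  define T' where "T' z = (\<Sum>p\<in>P. sc (cnj (c p)) (snd (TT p) z))" for z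
  have adj: "adjoint_pair UNIV UNIV ip ip T T'"
    unfolding adjoint_pair_def
  proof (intro conjI ballI)
    fix x z :: 'e
    have "ip (T x) z = (\<Sum>p\<in>P. msc (cnj (c p)) (ip (fst (TT p) x) z))"
      by (simp add: T_def ip_sum_l ip_sc_l)
    also have "\<dots> = (\<Sum>p\<in>P. msc (cnj (c p)) (ip x (snd (TT p) z)))"
      using TT T_adj by (intro sum.cong) (simp_all, metis)
    also have "\<dots> = ip x (T' z)"
      by (simp add: T'_def ip_sum_r ip_sc_r)
    finally show "ip (T x) z = ip x (T' z)" .
  qed auto
  have "(\<Sum>p\<in>P. msc (c p) (G p i j)) = ip (w i) (T (w j))" for i j
  proof -
    have "ip (w i) (T (w j)) = (\<Sum>p\<in>P. msc (c p) (ip (w i) (fst (TT p) (w j))))"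
      by (simp add: T_def ip_sum_r ip_sc_r)
    also have "\<dots> = (\<Sum>p\<in>P. msc (c p) (G p i j))"
      using TT by (intro sum.cong) auto
    finally show ?thesis by simp
  qed
  then show ?thesis using adj by blast
qed

end


context qsetup begin

lemma key2: "w j = (\<Sum>m\<in>K. act (y m) (theta (f m j) (g m)))"
proof -
  define a where "a m = theta (f m j) (g m)" for m
  have ab: "m \<in> K \<Longrightarrow> a m \<in> balg bout" for m by (simp add: a_def a_balg)
  have xM: "m \<in> K \<Longrightarrow> xpre m \<in> Mcar bout" for m using xpre_prop by blast
  have xC: "m \<in> K \<Longrightarrow> opX Cm (xpre m) = (\<lambda>i. theta (g m) (f m i))" for m using xpre_prop by blast
  define u where "u i = (\<Sum>m\<in>K. a m ** xpre m i)" for i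
  have uM: "u \<in> Mcar bout"
    unfolding Mcar_def u_def
  proof (intro allI CollectI balg_sum balg_mult)
    fix i m assume m: "m \<in> K"
    show "a m \<in> balg bout" using ab[OF m] .
    show "xpre m i \<in> balg bout" using Mcar_balg[OF xM[OF m]] .
  qed
  have "W u = (\<Sum>i\<in>UNIV. act (w i) (\<Sum>m\<in>K. a m ** xpre m i))"
    by (simp add: W_expand[OF uM] u_def)
  also have "\<dots> = (\<Sum>i\<in>UNIV. \<Sum>m\<in>K. act (act (w i) (xpre m i)) (a m))"
  proof (rule sum.cong[OF refl])
    fix i
    have "act (w i) (\<Sum>m\<in>K. a m ** xpre m i) = (\<Sum>m\<in>K. act (w i) (a m ** xpre m i))"
      by (rule act_sum2) (simp add: ab Mcar_balg xM)
    also have "\<dots> = (\<Sum>m\<in>K. act (act (w i) (xpre m i)) (a m))"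
      by (rule sum.cong) (simp_all add: act_act ab Mcar_balg xM)
    finally show "act (w i) (\<Sum>m\<in>K. a m ** xpre m i) = (\<Sum>m\<in>K. act (act (w i) (xpre m i)) (a m))" .
  qed
  also have "\<dots> = (\<Sum>m\<in>K. \<Sum>i\<in>UNIV. act (act (w i) (xpre m i)) (a m))"
    by (rule sum.swap)
  also have "\<dots> = (\<Sum>m\<in>K. act (y m) (a m))"
    using ab xM by (intro sum.cong refl) (simp add: act_sum1 y_def W_expand)
  finally have Wu: "W u = (\<Sum>m\<in>K. act (y m) (a m))" .
  have CuCd: "opX Cm u = opX Cm (delt j)"
  proof
    fix i
    have "opX Cm u i = (\<Sum>s\<in>UNIV. \<Sum>m\<in>K. a m ** (xpre m s ** Cm i s))"
      by (simp add: opX_def u_def matrix_sum_l matrix_mul_assoc)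
    also have "\<dots> = (\<Sum>m\<in>K. \<Sum>s\<in>UNIV. a m ** (xpre m s ** Cm i s))"
      by (rule sum.swap)
    also have "\<dots> = (\<Sum>m\<in>K. a m ** opX Cm (xpre m) i)"
      by (simp add: opX_def matrix_sum_r)
    also have "\<dots> = (\<Sum>m\<in>K. theta (f m j) (f m i))"
      using xC by (intro sum.cong refl) (simp add: a_def g_def theta_theta_axis)
    also have "\<dots> = opX Cm (delt j) i" by (simp add: opX_delt CF)
    finally show "opX Cm u i = opX Cm (delt j) i" .
  qed
  have dM: "delt j \<in> Mcar bout" by (rule delt_Mcar)
  have e1: "ip (w j) (W u) = ip (w j) (w j)"
    unfolding w_def by (simp add: ip_W_W dM uM CuCd)
  have e2: "ip (W u) (W u) = ip (W u) (w j)"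
    unfolding w_def by (simp add: ip_W_W dM uM CuCd)
  have "ip (w j - W u) (w j - W u) = 0"
    by (simp add: ip_diff_l ip_diff_r e1 e2)
  then have "w j - W u = 0" by (rule ip_nondeg)
  then show ?thesis using Wu a_def by simp
qed

lemma rb_prop: assumes m: "m \<in> K" and "f m j \<noteq> 0" shows "bout (rb (fst (snd m))) = fst (snd m)"
proof -
  obtain t where "f m j $ t \<noteq> 0" using assms(2) by (metis vec_eq_iff zero_index)
  then have "bout t = fst (snd m)" using supp[OF m] by simp
  then show ?thesis unfolding rb_def by (rule someI)
qed

lemma sub:
  assumes adj: "adjoint_pair UNIV UNIV ip ip T T'"
  shows "\<exists>c. \<forall>i j. ip (w i) (T (w j)) =
     (\<Sum>p\<in>{p. p \<in> K \<times> K \<and> fst (snd (fst p)) = fst (snd (snd p))}. msc (c p) (theta (f (snd p) j) (f (fst p) i)))"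
proof -
  define a where "a m j = theta (f m j) (g m)" for m j
  have ab: "m \<in> K \<Longrightarrow> a m j \<in> balg bout" for m j by (simp add: a_def a_balg)
  define Z where "Z m m' = ip (y m) (T (y m'))" for m m'
  define r where "r (m::'a \<times> 'b \<times> 'k) = rb (fst (snd m))" for m
  define c where "c p = Z (fst p) (snd p) $ r (snd p) $ r (fst p)" for p
  define F where "F i j p = msc (c p) (theta (f (snd p) j) (f (fst p) i))" for i j p
  have "ip (w i) (T (w j)) = (\<Sum>p\<in>{p. p \<in> K \<times> K \<and> fst (snd (fst p)) = fst (snd (snd p))}. F i j p)" for i j
  proof -
    have Tw: "T (w j) = (\<Sum>m\<in>K. act (T (y m)) (a m j))"
      unfolding key2[of j] a_def[symmetric] using ab by (rule T_lin[OF adj])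
    have "ip (w i) (T (w j)) = ip (\<Sum>m\<in>K. act (y m) (a m i)) (\<Sum>m'\<in>K. act (T (y m')) (a m' j))"
      using Tw key2[of i] a_def by simp
    also have "\<dots> = (\<Sum>m'\<in>K. \<Sum>m\<in>K. a m' j ** (Z m m' ** cadj (a m i)))"
      using ab by (simp add: ip_sum_l ip_sum_r ip_act_l ip_act_r Z_def)
    also have "\<dots> = (\<Sum>m\<in>K. \<Sum>m'\<in>K. a m' j ** (Z m m' ** cadj (a m i)))"
      by (rule sum.swap)
    also have "\<dots> = (\<Sum>m\<in>K. \<Sum>m'\<in>K. F i j (m, m'))"
      by (simp add: a_def cadj_theta g_def theta_Z_theta F_def c_def r_def matrix_mul_assoc)
    also have "\<dots> = (\<Sum>p\<in>K \<times> K. F i j p)"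
      by (simp add: sum.cartesian_product)
    also have "\<dots> = (\<Sum>p\<in>{p. p \<in> K \<times> K \<and> fst (snd (fst p)) = fst (snd (snd p))}. F i j p)"
    proof (rule sum.mono_neutral_right)
      show "finite (K \<times> K)" using finK by simp
      show "{p. p \<in> K \<times> K \<and> fst (snd (fst p)) = fst (snd (snd p))} \<subseteq> K \<times> K" by blast
      show "\<forall>p\<in>K \<times> K - {p. p \<in> K \<times> K \<and> fst (snd (fst p)) = fst (snd (snd p))}. F i j p = 0"
      proof
        fix p assume p: "p \<in> K \<times> K - {p. p \<in> K \<times> K \<and> fst (snd (fst p)) = fst (snd (snd p))}"
        then have m1: "fst p \<in> K" and m2: "snd p \<in> K" and ne: "fst (snd (fst p)) \<noteq> fst (snd (snd p))"
          by auto
        show "F i j p = 0"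
        proof (cases "f (snd p) j = 0 \<or> f (fst p) i = 0")
          case True then show ?thesis by (auto simp: F_def)
        next
          case False
          then have "bout (r (snd p)) = fst (snd (snd p))" "bout (r (fst p)) = fst (snd (fst p))"
            using rb_prop[OF m2, of j] rb_prop[OF m1, of i] r_def by auto
          then have "bout (r (snd p)) \<noteq> bout (r (fst p))" using ne by simp
          then have "c p = 0" unfolding c_def using ip_balg[of "y (fst p)" "T (y (snd p))"]
            by (simp add: Z_def balg_iff)
          then show ?thesis by (simp add: F_def vec_eq_iff)
        qed
      qed
    qed
    finally show ?thesis .
  qed
  then show ?thesis unfolding F_def by blast
qed

end

theorem theorem3p16:
  fixes bin :: "'i::finite \<Rightarrow> 'a" and bout :: "'o::finite \<Rightarrow> 'b"
    and \<Phi> :: "complex^'i^'i \<Rightarrow> complex^'o^'o"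
    and K :: "('a \<times> 'b \<times> 'k) set" and E :: "'a \<times> 'b \<times> 'k \<Rightarrow> complex^'i^'o"
    and sc :: "complex \<Rightarrow> 'e::ab_group_add \<Rightarrow> 'e"
    and act :: "'e \<Rightarrow> complex^'o^'o \<Rightarrow> 'e"
    and ip :: "'e \<Rightarrow> 'e \<Rightarrow> complex^'o^'o"
    and W :: "('i \<Rightarrow> complex^'o^'o) \<Rightarrow> 'e"
  assumes "quantum_channel bin bout \<Phi>"
    and "kraus_related bin bout \<Phi> K E"
    and "stinespring_module bin bout \<Phi> sc act ip W"
  shows "confus_multigraph_of bout ip W =
           span_fam {((a, b, k), (a', b', l)). (a, b, k) \<in> K \<and> (a', b', l) \<in> K \<and> b = b'}
             (\<lambda>((a, b, k), (a', b', l)) i j.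
                theta (E (a', b', l) *v axis j 1) (E (a, b, k) *v axis i 1))"
proof -
  note QC = assms(1) and KR = assms(2) and SM = assms(3)
  have H: "hilbert_opmod bout sc act ip" using SM by (simp add: stinespring_module_def)
  obtain W' where AW: "adjoint_pair (Mcar bout) UNIV Mip ip W W'"
    and WW: "\<forall>v\<in>Mcar bout. W' (W v) = opX (Cmat bin \<Phi>) v"
    using SM unfolding stinespring_module_def by blast
  have finK: "finite K" using KR by (simp add: kraus_related_def)
  interpret Q: qsetup bout sc act ip bin K E "Cmat bin \<Phi>" W W'
  proof (unfold_locales)
    show "hilbert_opmod bout sc act ip" by (rule H)
    show "finite K" by (rule finK)
    show "\<And>m r s. m \<in> K \<Longrightarrow> E m $ r $ s \<noteq> 0 \<Longrightarrow> bout r = fst (snd m) \<and> bin s = fst m"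
      using kraus_supp[OF KR] by blast
    show "\<And>i j. Cmat bin \<Phi> i j = (\<Sum>m\<in>K. theta (E m *v axis j 1) (E m *v axis i 1))"
      by (rule Cmat_formula[OF QC KR])
    show "adjoint_pair (Mcar bout) UNIV Mip ip W W'" by (rule AW)
    show "\<And>v. v \<in> Mcar bout \<Longrightarrow> W' (W v) = opX (Cmat bin \<Phi>) v" using WW by blast
  qed
  define P where "P = {((a, b, k), (a', b', l)). (a, b, k) \<in> K \<and> (a', b', l) \<in> K \<and> b = b'}"
  define G where "G = (\<lambda>((a, b, k), (a', b', l)) i j.
                theta (E (a', b', l) *v axis j 1) (E (a, b, k) *v axis i 1))"
  have P_eq: "P = {p. p \<in> K \<times> K \<and> fst (snd (fst p)) = fst (snd (snd p))}"
    unfolding P_def by auto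
  have G_eq: "G p = (\<lambda>i j. theta (E (snd p) *v axis j 1) (E (fst p) *v axis i 1))" for p
    unfolding G_def by (cases p) auto
  have "confus_multigraph_of bout ip W = span_fam P G"
  proof (intro set_eqI iffI)
    fix X assume "X \<in> confus_multigraph_of bout ip W"
    then obtain T T' where adj: "adjoint_pair UNIV UNIV ip ip T T'"
      and XT: "\<forall>i j. X i j = ip (Q.w i) (T (Q.w j))"
      unfolding Q.conf_iff by blast
    obtain c where c: "\<forall>i j. ip (Q.w i) (T (Q.w j)) =
     (\<Sum>p\<in>{p. p \<in> K \<times> K \<and> fst (snd (fst p)) = fst (snd (snd p))}. msc (c p) (theta (E (snd p) *v axis j 1) (E (fst p) *v axis i 1)))"
      using Q.sub[OF adj] by blast
    have "X = (\<lambda>i j. \<Sum>p\<in>P. msc (c p) (G p i j))"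
      using XT c by (intro ext) (simp add: P_eq G_eq)
    then show "X \<in> span_fam P G" unfolding span_fam_def by blast
  next
    fix X assume "X \<in> span_fam P G"
    then obtain c where Xc: "X = (\<lambda>i j. \<Sum>p\<in>P. msc (c p) (G p i j))"
      unfolding span_fam_def by blast
    have finP: "finite P" unfolding P_eq using finK by simp
    have Gb: "G p i j \<in> balg bout" if p: "p \<in> P" for p i j
    proof -
      have m1: "fst p \<in> K" and m2: "snd p \<in> K" and b: "fst (snd (fst p)) = fst (snd (snd p))"
        using p by (auto simp: P_eq)
      show ?thesis
        unfolding G_eq using Q.f_inblk[OF m2, of j] Q.f_inblk[OF m1, of i] b
        by (intro theta_balg) auto
    qed
    have "\<exists>T T'. adjoint_pair UNIV UNIV ip ip T T' \<and>
        (\<forall>i j. (\<Sum>p\<in>P. msc (c p) (G p i j)) = ip (Q.w i) (T (Q.w j)))"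
    proof (rule Q.span_sub[OF finP])
      fix p assume p: "p \<in> P"
      have m1: "fst p \<in> K" and m2: "snd p \<in> K" and b: "fst (snd (fst p)) = fst (snd (snd p))"
        using p by (auto simp: P_eq)
      show "\<exists>T T'. adjoint_pair UNIV UNIV ip ip T T' \<and> (\<forall>i j. G p i j = ip (Q.w i) (T (Q.w j)))"
        unfolding G_eq using Q.gen[OF m1 m2 b] by simp
    qed
    then show "X \<in> confus_multigraph_of bout ip W"
      unfolding Q.conf_iff Xc using Gb by (auto intro!: balg_sum balg_msc)
  qed
  then show ?thesis unfolding P_def G_def .
qed

end
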